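(* Let $h \geq 1$, $N \geq 1$, and let $d_1 \geq \dots \geq d_N$ and $d_1' \geq \dots \geq d_N'$ be integers in $[0,h]$. Then $P(d_1, \dots, d_N)(x) \geq P(d_1', \dots, d_N')(x)$ for all real $0 \leq x \leq h$ if and only if $d_1' + \dots + d_i' \leq d_1 + \dots + d_i$ for all $1 \leq i \leq N$.
   Context: For integers $d_1, \dots, d_N$ between $0$ and $h$, $P(d_1,\dots,d_N)$ is the function on $[0,h]$ given by $P(d_1, \dots, d_N)(x) = \frac{1}{N} \sum_{i=1}^N \max(0, x + d_i - h)$. *)

theory Defs
  imports Main Complex_Main
begin

definition P :: "int \<Rightarrow> nat \<Rightarrow> (nat \<Rightarrow> int) \<Rightarrow> real \<Rightarrow> real" where
  "P h N d x = (1 / real N) * (\<Sum>i=1..N. max 0 (x + real_of_int (d i) - real_of_int h))"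

end

theory Submission
  imports Defs
begin

lemma split_sum_nat:
  fixes f :: "nat \<Rightarrow> real"
  assumes "m \<le> N"
  shows "(\<Sum>k=1..N. f k) = (\<Sum>k=1..m. f k) + (\<Sum>k=Suc m..N. f k)"
proof -
  have "{1..N} = {1..m} \<union> {Suc m..N}" using assms by auto
  then show ?thesis by (simp add: sum.union_disjoint)
qed

lemma fwd:
  fixes a b :: "nat \<Rightarrow> real" and y :: real
  assumes mono: "\<And>i j. 1 \<le> i \<Longrightarrow> i \<le> j \<Longrightarrow> j \<le> N \<Longrightarrow> b j \<le> b i"
    and pre: "\<And>i. 1 \<le> i \<Longrightarrow> i \<le> N \<Longrightarrow> (\<Sum>k=1..i. b k) \<le> (\<Sum>k=1..i. a k)"
  shows "(\<Sum>k=1..N. max 0 (b k - y)) \<le> (\<Sum>k=1..N. max 0 (a k - y))"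
proof -
  define S where "S = {k\<in>{1..N}. y < b k}"
  define m where "m = (if S = {} then 0 else Max S)"
  have finS: "finite S" unfolding S_def by auto
  have mN: "m \<le> N" unfolding m_def S_def by (auto simp: finS[unfolded S_def])
  have iff: "k \<le> m \<longleftrightarrow> y < b k" if "1 \<le> k" "k \<le> N" for k
  proof
    assume "k \<le> m"
    then have "S \<noteq> {}" using that unfolding m_def by (auto split: if_splits)
    then have "m \<in> S" unfolding m_def using finS by simp
    then have "y < b m" "m \<le> N" unfolding S_def by auto
    then show "y < b k" using mono[of k m] that \<open>k \<le> m\<close> by linarith
  next
    assume "y < b k"
    then have "k \<in> S" using that unfolding S_def by auto
    then show "k \<le> m" unfolding m_def using finS by auto
  qed
  have "(\<Sum>k=1..N. max 0 (b k - y)) = (\<Sum>k=1..m. max 0 (b k - y)) + (\<Sum>k=Suc m..N. max 0 (b k - y))"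
    using split_sum_nat[OF mN] .
  also have "(\<Sum>k=Suc m..N. max 0 (b k - y)) = 0"
  proof (rule sum.neutral, rule ballI)
    fix k assume k: "k \<in> {Suc m..N}"
    then have "\<not> y < b k" using iff[of k] by auto
    then show "max 0 (b k - y) = 0" by simp
  qed
  also have "(\<Sum>k=1..m. max 0 (b k - y)) = (\<Sum>k=1..m. b k - y)"
    by (rule sum.cong) (use iff mN in force)+
  also have "\<dots> = (\<Sum>k=1..m. b k) - real m * y" by (simp add: sum_subtractf)
  also have "\<dots> \<le> (\<Sum>k=1..m. a k) - real m * y"
  proof (cases "m = 0")
    case False then show ?thesis using pre[of m] mN by simp
  qed simp
  also have "\<dots> = (\<Sum>k=1..m. a k - y)" by (simp add: sum_subtractf)
  also have "\<dots> \<le> (\<Sum>k=1..m. max 0 (a k - y))" by (rule sum_mono) simp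
  also have "\<dots> \<le> (\<Sum>k=1..m. max 0 (a k - y)) + (\<Sum>k=Suc m..N. max 0 (a k - y))"
    by (simp add: sum_nonneg)
  also have "\<dots> = (\<Sum>k=1..N. max 0 (a k - y))" using split_sum_nat[OF mN] by simp
  finally show ?thesis by simp
qed

lemma bwd:
  fixes a b :: "nat \<Rightarrow> real"
  assumes mono: "\<And>i j. 1 \<le> i \<Longrightarrow> i \<le> j \<Longrightarrow> j \<le> N \<Longrightarrow> a j \<le> a i"
    and ineq: "(\<Sum>k=1..N. max 0 (b k - a i)) \<le> (\<Sum>k=1..N. max 0 (a k - a i))"
    and i: "1 \<le> i" "i \<le> N"
  shows "(\<Sum>k=1..i. b k) \<le> (\<Sum>k=1..i. a k)"
proof -
  have iN: "i \<le> N" using i by simp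
  have "(\<Sum>k=1..i. b k) - real i * a i = (\<Sum>k=1..i. b k - a i)" by (simp add: sum_subtractf)
  also have "\<dots> \<le> (\<Sum>k=1..i. max 0 (b k - a i))" by (rule sum_mono) simp
  also have "\<dots> \<le> (\<Sum>k=1..i. max 0 (b k - a i)) + (\<Sum>k=Suc i..N. max 0 (b k - a i))"
    by (simp add: sum_nonneg)
  also have "\<dots> = (\<Sum>k=1..N. max 0 (b k - a i))" using split_sum_nat[OF iN] by simp
  also have "\<dots> \<le> (\<Sum>k=1..N. max 0 (a k - a i))" by (rule ineq)
  also have "\<dots> = (\<Sum>k=1..i. max 0 (a k - a i)) + (\<Sum>k=Suc i..N. max 0 (a k - a i))"
    using split_sum_nat[OF iN] .
  also have "(\<Sum>k=Suc i..N. max 0 (a k - a i)) = 0"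
    by (rule sum.neutral) (use mono i in force)
  also have "(\<Sum>k=1..i. max 0 (a k - a i)) = (\<Sum>k=1..i. a k - a i)"
    by (rule sum.cong) (use mono i in force)+
  also have "\<dots> = (\<Sum>k=1..i. a k) - real i * a i" by (simp add: sum_subtractf)
  finally show ?thesis by simp
qed

theorem mainTheorem2:
  fixes h :: int and N :: nat and d d' :: "nat \<Rightarrow> int"
  assumes "h \<ge> 1" and "N \<ge> 1"
    and "\<And>i. 1 \<le> i \<Longrightarrow> i \<le> N \<Longrightarrow> 0 \<le> d i \<and> d i \<le> h"
    and "\<And>i. 1 \<le> i \<Longrightarrow> i \<le> N \<Longrightarrow> 0 \<le> d' i \<and> d' i \<le> h"
    and "\<And>i j. 1 \<le> i \<Longrightarrow> i \<le> j \<Longrightarrow> j \<le> N \<Longrightarrow> d j \<le> d i"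
    and "\<And>i j. 1 \<le> i \<Longrightarrow> i \<le> j \<Longrightarrow> j \<le> N \<Longrightarrow> d' j \<le> d' i"
  shows "(\<forall>x::real. 0 \<le> x \<and> x \<le> real_of_int h \<longrightarrow> P h N d x \<ge> P h N d' x)
     \<longleftrightarrow> (\<forall>i. 1 \<le> i \<and> i \<le> N \<longrightarrow> (\<Sum>k=1..i. d' k) \<le> (\<Sum>k=1..i. d k))"
proof -
  define a where "a = (\<lambda>k. real_of_int (d k))"
  define b where "b = (\<lambda>k. real_of_int (d' k))"
  have Npos: "real N > 0" using assms(2) by simp
  have Peq: "P h N e x = (1 / real N) * (\<Sum>k=1..N. max 0 (real_of_int (e k) - (real_of_int h - x)))"
    for e x unfolding P_def by (simp add: algebra_simps)
  have Pcmp: "P h N d x \<ge> P h N d' x \<longleftrightarrow>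
      (\<Sum>k=1..N. max 0 (b k - (real_of_int h - x))) \<le> (\<Sum>k=1..N. max 0 (a k - (real_of_int h - x)))" for x
    unfolding Peq a_def b_def using Npos by (simp add: divide_le_cancel)
  have sumeq: "(\<Sum>k=1..i. d' k) \<le> (\<Sum>k=1..i. d k) \<longleftrightarrow> (\<Sum>k=1..i. b k) \<le> (\<Sum>k=1..i. a k)" for i
    unfolding a_def b_def by (metis of_int_le_iff of_int_sum)
  show ?thesis
  proof
    assume H: "\<forall>x::real. 0 \<le> x \<and> x \<le> real_of_int h \<longrightarrow> P h N d x \<ge> P h N d' x"
    show "\<forall>i. 1 \<le> i \<and> i \<le> N \<longrightarrow> (\<Sum>k=1..i. d' k) \<le> (\<Sum>k=1..i. d k)"
    proof (intro allI impI)
      fix i assume i: "1 \<le> i \<and> i \<le> N"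
      have x: "0 \<le> real_of_int h - a i" "real_of_int h - a i \<le> real_of_int h"
        using assms(3)[of i] i unfolding a_def by auto
      have "(\<Sum>k=1..N. max 0 (b k - a i)) \<le> (\<Sum>k=1..N. max 0 (a k - a i))"
        using H[rule_format, OF conjI[OF x]] Pcmp[of "real_of_int h - a i"] by simp
      then have "(\<Sum>k=1..i. b k) \<le> (\<Sum>k=1..i. a k)"
        using i by (intro bwd[of N a b i]) (auto simp: a_def intro: assms(5))
      then show "(\<Sum>k=1..i. d' k) \<le> (\<Sum>k=1..i. d k)" using sumeq by simp
    qed
  next
    assume H: "\<forall>i. 1 \<le> i \<and> i \<le> N \<longrightarrow> (\<Sum>k=1..i. d' k) \<le> (\<Sum>k=1..i. d k)"
    show "\<forall>x::real. 0 \<le> x \<and> x \<le> real_of_int h \<longrightarrow> P h N d x \<ge> P h N d' x"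
    proof (intro allI impI)
      fix x :: real
      have "(\<Sum>k=1..N. max 0 (b k - (real_of_int h - x))) \<le> (\<Sum>k=1..N. max 0 (a k - (real_of_int h - x)))"
        by (rule fwd[of N b a]) (use assms(6) H sumeq in \<open>auto simp: b_def\<close>)
      then show "P h N d x \<ge> P h N d' x" using Pcmp by simp
    qed
  qed
qed

end
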